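(* Let $A,B\in\mathbb{T}^{m\times n}$, with every column of $A$ and every row of $B$ containing at least one finite entry, and let $F=A^\sharp\circ B$, i.e. $F(x)=A^\sharp(B\odot x)$. Suppose there exists $v\in\mathbb{R}^n$ such that $F(v)=\rho(F)+v$. Then \[ R(F)\le (n-1)\bigl(|\rho(F)|+W\bigr). \]
   Context: $\mathbb{T}=\mathbb{R}\cup\{-\infty\}$. $(B\odot x)_i=\max_j(B_{ij}+x_j)$; $A^\sharp(y)_j=\min_i(-A_{ij}+y_i)$ with $(+\infty)+(-\infty)=+\infty$. A bias vector is $v\in\mathbb{R}^n$ with $F(v)=\lambda+v$ for some $\lambda\in\mathbb{R}$ (entrywise addition); this $\lambda=\rho(F)$ is unique. $\|x\|_H=\max_ix_i-\min_ix_i$, and $R(F)=\inf\{\|u\|_H: u\in\mathbb{R}^n,\ F(u)=\rho(F)+u\}$. $W=\max\{|A_{ij}-B_{ih}|: A_{ij}\ne-\infty,\ B_{ih}\ne-\infty,\ i\in[m],\ j,h\in[n]\}$. *)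

theory Defs
  imports "HOL-Library.Extended_Real"
begin

text \<open>Tropical semiring T = R \<union> {-\<infinity>} is modelled by ereal values different from \<infinity>.
  Matrices are functions nat \<Rightarrow> nat \<Rightarrow> ereal with row indices in {..<m}, column
  indices in {..<n}; vectors in R^n are functions nat \<Rightarrow> real (only indices < n matter).\<close>

definition maxplus_mult :: "(nat \<Rightarrow> nat \<Rightarrow> ereal) \<Rightarrow> nat \<Rightarrow> (nat \<Rightarrow> real) \<Rightarrow> nat \<Rightarrow> ereal" where
  "maxplus_mult B n x i = Max ((\<lambda>j. B i j + ereal (x j)) ` {..<n})"

text \<open>A sharp: (A^#(y))_j = min_i (-A_ij + y_i); ereal addition satisfies \<infinity> + -\<infinity> = \<infinity>.\<close>
definition sharp :: "(nat \<Rightarrow> nat \<Rightarrow> ereal) \<Rightarrow> nat \<Rightarrow> (nat \<Rightarrow> ereal) \<Rightarrow> nat \<Rightarrow> ereal" where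
  "sharp A m y j = Min ((\<lambda>i. - A i j + y i) ` {..<m})"

definition F_op :: "(nat \<Rightarrow> nat \<Rightarrow> ereal) \<Rightarrow> (nat \<Rightarrow> nat \<Rightarrow> ereal) \<Rightarrow> nat \<Rightarrow> nat \<Rightarrow> (nat \<Rightarrow> real) \<Rightarrow> nat \<Rightarrow> ereal" where
  "F_op A B m n x = sharp A m (maxplus_mult B n x)"

definition is_bias :: "(nat \<Rightarrow> nat \<Rightarrow> ereal) \<Rightarrow> (nat \<Rightarrow> nat \<Rightarrow> ereal) \<Rightarrow> nat \<Rightarrow> nat \<Rightarrow> real \<Rightarrow> (nat \<Rightarrow> real) \<Rightarrow> bool" where
  "is_bias A B m n lam v \<longleftrightarrow> (\<forall>j<n. F_op A B m n v j = ereal (lam + v j))"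

definition rho :: "(nat \<Rightarrow> nat \<Rightarrow> ereal) \<Rightarrow> (nat \<Rightarrow> nat \<Rightarrow> ereal) \<Rightarrow> nat \<Rightarrow> nat \<Rightarrow> real" where
  "rho A B m n = (THE lam. \<exists>v. is_bias A B m n lam v)"

definition hnorm :: "nat \<Rightarrow> (nat \<Rightarrow> real) \<Rightarrow> real" where
  "hnorm n x = Max (x ` {..<n}) - Min (x ` {..<n})"

definition R_F :: "(nat \<Rightarrow> nat \<Rightarrow> ereal) \<Rightarrow> (nat \<Rightarrow> nat \<Rightarrow> ereal) \<Rightarrow> nat \<Rightarrow> nat \<Rightarrow> real" where
  "R_F A B m n = Inf {hnorm n u | u. is_bias A B m n (rho A B m n) u}"

definition W_const :: "(nat \<Rightarrow> nat \<Rightarrow> ereal) \<Rightarrow> (nat \<Rightarrow> nat \<Rightarrow> ereal) \<Rightarrow> nat \<Rightarrow> nat \<Rightarrow> real" where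
  "W_const A B m n = Max {\<bar>real_of_ereal (A i j) - real_of_ereal (B i h)\<bar> | i j h.
       i < m \<and> j < n \<and> h < n \<and> A i j \<noteq> -\<infinity> \<and> B i h \<noteq> -\<infinity>}"

end

theory Submission
  imports Defs
begin

definition cbias :: "(nat \<Rightarrow> nat \<Rightarrow> ereal) \<Rightarrow> (nat \<Rightarrow> nat \<Rightarrow> ereal) \<Rightarrow> nat \<Rightarrow> nat \<Rightarrow> real \<Rightarrow> (nat \<Rightarrow> real) \<Rightarrow> bool" where
  "cbias A B m n lam v \<longleftrightarrow> (\<forall>j<n. (\<forall>i<m. A i j \<noteq> -\<infinity> \<longrightarrow> (\<exists>h<n. B i h \<noteq> -\<infinity> \<and> lam + v j + real_of_ereal (A i j) \<le> real_of_ereal (B i h) + v h))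
     \<and> (\<exists>i<m. A i j \<noteq> -\<infinity> \<and> (\<forall>h<n. B i h \<noteq> -\<infinity> \<longrightarrow> real_of_ereal (B i h) + v h \<le> lam + v j + real_of_ereal (A i j))))"

lemma Max_fin:
  fixes B :: "nat \<Rightarrow> nat \<Rightarrow> ereal" and n :: nat
  assumes "n \<ge> 1" "\<forall>h<n. B i h \<noteq> \<infinity>" "\<exists>h<n. B i h \<noteq> -\<infinity>"
  shows "\<exists>r. Max ((\<lambda>h. B i h + ereal (v h)) ` {..<n}) = ereal r"
proof -
  let ?S = "(\<lambda>h. B i h + ereal (v h)) ` {..<n}"
  have fin: "finite ?S" "?S \<noteq> {}" using assms(1) by (auto simp: lessThan_empty_iff)
  have "Max ?S \<in> ?S" using fin by (rule Max_in)
  then obtain h where h: "h < n" "Max ?S = B i h + ereal (v h)" by auto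
  then have ninf: "Max ?S \<noteq> \<infinity>" using assms(2) by auto
  obtain h0 where h0: "h0 < n" "B i h0 \<noteq> -\<infinity>" using assms(3) by auto
  have "B i h0 + ereal (v h0) \<le> Max ?S" using fin h0 by (intro Max_ge) auto
  moreover have "B i h0 + ereal (v h0) \<noteq> -\<infinity>" using h0 by auto
  ultimately have "Max ?S \<noteq> -\<infinity>" by auto
  with ninf show ?thesis by (cases "Max ?S") auto
qed

lemma term_ge:
  fixes A B :: "nat \<Rightarrow> nat \<Rightarrow> ereal" and n :: nat
  assumes "\<forall>h<n. B i h \<noteq> \<infinity>" "A i j \<noteq> \<infinity>" "n \<ge> 1"
     "Max ((\<lambda>h. B i h + ereal (v h)) ` {..<n}) = ereal r"
  shows "ereal x \<le> - A i j + Max ((\<lambda>h. B i h + ereal (v h)) ` {..<n}) \<longleftrightarrow>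
     (A i j \<noteq> -\<infinity> \<longrightarrow> (\<exists>h<n. B i h \<noteq> -\<infinity> \<and> x + real_of_ereal (A i j) \<le> real_of_ereal (B i h) + v h))"
proof (cases "A i j")
  case (real a)
  have "ereal x \<le> - A i j + ereal r \<longleftrightarrow> ereal (x + a) \<le> ereal r" using real by auto
  also have "\<dots> \<longleftrightarrow> (\<exists>h<n. ereal (x+a) \<le> B i h + ereal (v h))"
    unfolding assms(4)[symmetric] using assms(3) by (subst Max_ge_iff) (auto simp: lessThan_empty_iff)
  also have "\<dots> \<longleftrightarrow> (\<exists>h<n. B i h \<noteq> -\<infinity> \<and> x + a \<le> real_of_ereal (B i h) + v h)"
  proof -
    have "ereal (x+a) \<le> B i h + ereal (v h) \<longleftrightarrow> B i h \<noteq> -\<infinity> \<and> x + a \<le> real_of_ereal (B i h) + v h" if "h < n" for h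
      using assms(1) that by (cases "B i h") auto
    then show ?thesis by auto
  qed
  finally show ?thesis using real assms(4) by simp
next
  case PInf then show ?thesis using assms by simp
next
  case MInf then show ?thesis using assms by simp
qed

lemma term_le:
  fixes A B :: "nat \<Rightarrow> nat \<Rightarrow> ereal" and n :: nat
  assumes "\<forall>h<n. B i h \<noteq> \<infinity>" "A i j \<noteq> \<infinity>" "n \<ge> 1"
     "Max ((\<lambda>h. B i h + ereal (v h)) ` {..<n}) = ereal r"
  shows "- A i j + Max ((\<lambda>h. B i h + ereal (v h)) ` {..<n}) \<le> ereal x \<longleftrightarrow>
     (A i j \<noteq> -\<infinity> \<and> (\<forall>h<n. B i h \<noteq> -\<infinity> \<longrightarrow> real_of_ereal (B i h) + v h \<le> x + real_of_ereal (A i j)))"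
proof (cases "A i j")
  case (real a)
  have "- A i j + ereal r \<le> ereal x \<longleftrightarrow> ereal r \<le> ereal (x + a)" using real by auto
  also have "\<dots> \<longleftrightarrow> (\<forall>h<n. B i h + ereal (v h) \<le> ereal (x+a))"
    unfolding assms(4)[symmetric] using assms(3) by (subst Max_le_iff) (auto simp: lessThan_empty_iff)
  also have "\<dots> \<longleftrightarrow> (\<forall>h<n. B i h \<noteq> -\<infinity> \<longrightarrow> real_of_ereal (B i h) + v h \<le> x + a)"
  proof -
    have "B i h + ereal (v h) \<le> ereal (x+a) \<longleftrightarrow> (B i h \<noteq> -\<infinity> \<longrightarrow> real_of_ereal (B i h) + v h \<le> x + a)" if "h < n" for h
      using assms(1) that by (cases "B i h") auto
    then show ?thesis by auto
  qed
  finally show ?thesis using real assms(4) by simp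
next
  case PInf then show ?thesis using assms by simp
next
  case MInf then show ?thesis using assms by simp
qed

lemma bias_iff:
  fixes A B :: "nat \<Rightarrow> nat \<Rightarrow> ereal" and m n :: nat and v :: "nat \<Rightarrow> real"
  assumes "m \<ge> 1" and "n \<ge> 1"
    and fin: "\<forall>i<m. \<forall>j<n. A i j \<noteq> \<infinity> \<and> B i j \<noteq> \<infinity>"
    and row: "\<forall>i<m. \<exists>j<n. B i j \<noteq> -\<infinity>"
  shows "is_bias A B m n lam v \<longleftrightarrow> cbias A B m n lam v"
proof -
  have key: "F_op A B m n v j = ereal (lam + v j) \<longleftrightarrow>
     ((\<forall>i<m. A i j \<noteq> -\<infinity> \<longrightarrow> (\<exists>h<n. B i h \<noteq> -\<infinity> \<and> lam + v j + real_of_ereal (A i j) \<le> real_of_ereal (B i h) + v h))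
     \<and> (\<exists>i<m. A i j \<noteq> -\<infinity> \<and> (\<forall>h<n. B i h \<noteq> -\<infinity> \<longrightarrow> real_of_ereal (B i h) + v h \<le> lam + v j + real_of_ereal (A i j))))"
    if j: "j < n" for j
  proof -
    let ?T = "\<lambda>i. - A i j + Max ((\<lambda>h. B i h + ereal (v h)) ` {..<n})"
    have F: "F_op A B m n v j = Min (?T ` {..<m})"
      unfolding F_op_def sharp_def maxplus_mult_def by simp
    have finS: "finite (?T ` {..<m})" "?T ` {..<m} \<noteq> {}" using assms(1) by (auto simp: lessThan_empty_iff)
    have "Min (?T ` {..<m}) = ereal (lam + v j) \<longleftrightarrow>
        ereal (lam + v j) \<le> Min (?T ` {..<m}) \<and> Min (?T ` {..<m}) \<le> ereal (lam + v j)" by auto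
    also have "\<dots> \<longleftrightarrow> (\<forall>i<m. ereal (lam + v j) \<le> ?T i) \<and> (\<exists>i<m. ?T i \<le> ereal (lam + v j))"
      using finS by (simp add: Min_ge_iff Min_le_iff) blast
    also have "\<dots> \<longleftrightarrow> ((\<forall>i<m. A i j \<noteq> -\<infinity> \<longrightarrow> (\<exists>h<n. B i h \<noteq> -\<infinity> \<and> lam + v j + real_of_ereal (A i j) \<le> real_of_ereal (B i h) + v h))
     \<and> (\<exists>i<m. A i j \<noteq> -\<infinity> \<and> (\<forall>h<n. B i h \<noteq> -\<infinity> \<longrightarrow> real_of_ereal (B i h) + v h \<le> lam + v j + real_of_ereal (A i j))))"
    proof -
      have "(ereal (lam + v j) \<le> ?T i \<longleftrightarrow> (A i j \<noteq> -\<infinity> \<longrightarrow> (\<exists>h<n. B i h \<noteq> -\<infinity> \<and> lam + v j + real_of_ereal (A i j) \<le> real_of_ereal (B i h) + v h)))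
         \<and> (?T i \<le> ereal (lam + v j) \<longleftrightarrow> (A i j \<noteq> -\<infinity> \<and> (\<forall>h<n. B i h \<noteq> -\<infinity> \<longrightarrow> real_of_ereal (B i h) + v h \<le> lam + v j + real_of_ereal (A i j))))"
        if i: "i < m" for i
      proof -
        have Bf: "\<forall>h<n. B i h \<noteq> \<infinity>" using fin i by auto
        have Af: "A i j \<noteq> \<infinity>" using fin i j by auto
        obtain r where r: "Max ((\<lambda>h. B i h + ereal (v h)) ` {..<n}) = ereal r"
          using Max_fin[of n B i v] assms(2) Bf row i by blast
        show ?thesis using term_ge[where A=A and B=B and n=n and i=i and j=j and v=v and r=r and x="lam + v j", OF Bf Af assms(2) r] term_le[where A=A and B=B and n=n and i=i and j=j and v=v and r=r and x="lam + v j", OF Bf Af assms(2) r]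
          by simp
      qed
      then show ?thesis by auto
    qed
    finally show ?thesis using F by simp
  qed
  show ?thesis unfolding is_bias_def cbias_def using key by auto
qed

lemma cbias_unique:
  assumes "n \<ge> 1" "cbias A B m n lam v" "cbias A B m n mu w"
  shows "mu \<le> lam"
proof -
  let ?S = "(\<lambda>j. w j - v j) ` {..<n}"
  have fS: "finite ?S" "?S \<noteq> {}" using assms(1) by (auto simp: lessThan_empty_iff)
  have "Max ?S \<in> ?S" using fS by (rule Max_in)
  then obtain j0 where j0: "j0 < n" "Max ?S = w j0 - v j0" by auto
  have cmax: "w h - v h \<le> w j0 - v j0" if "h < n" for h
    using Max_ge[OF fS(1), of "w h - v h"] that j0 by auto
  obtain i where i: "i < m" "A i j0 \<noteq> -\<infinity>"
    "\<forall>h<n. B i h \<noteq> -\<infinity> \<longrightarrow> real_of_ereal (B i h) + v h \<le> lam + v j0 + real_of_ereal (A i j0)"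
    using assms(2) j0(1) unfolding cbias_def by blast
  obtain h where h: "h < n" "B i h \<noteq> -\<infinity>" "mu + w j0 + real_of_ereal (A i j0) \<le> real_of_ereal (B i h) + w h"
    using assms(3) j0(1) i unfolding cbias_def by blast
  have "real_of_ereal (B i h) + v h \<le> lam + v j0 + real_of_ereal (A i j0)" using i h by auto
  moreover have "w h - v h \<le> w j0 - v j0" using cmax h by auto
  ultimately show ?thesis using h(3) by linarith
qed

lemma transfer:
  assumes "cbias A B m n lam v"
    and Wb: "\<forall>i<m. \<forall>j<n. \<forall>h<n. A i j \<noteq> -\<infinity> \<longrightarrow> B i h \<noteq> -\<infinity> \<longrightarrow> \<bar>real_of_ereal (A i j) - real_of_ereal (B i h)\<bar> \<le> W"
    and P: "\<forall>j<n. \<forall>h<n. \<forall>\<beta>. \<bar>\<beta>\<bar> \<le> \<bar>lam\<bar> + W \<longrightarrow> (\<beta> \<le> v h - v j \<longrightarrow> \<beta> \<le> u h - u j) \<and> (v h - v j \<le> \<beta> \<longrightarrow> u h - u j \<le> \<beta>)"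
  shows "cbias A B m n lam u"
  unfolding cbias_def
proof (rule allI, rule impI, rule conjI)
  fix j assume j: "j < n"
  show "\<forall>i<m. A i j \<noteq> -\<infinity> \<longrightarrow> (\<exists>h<n. B i h \<noteq> -\<infinity> \<and> lam + u j + real_of_ereal (A i j) \<le> real_of_ereal (B i h) + u h)"
  proof (intro allI impI)
    fix i assume i: "i < m" "A i j \<noteq> -\<infinity>"
    obtain h where h: "h < n" "B i h \<noteq> -\<infinity>" "lam + v j + real_of_ereal (A i j) \<le> real_of_ereal (B i h) + v h"
      using assms(1) i j unfolding cbias_def by blast
    define \<beta> where "\<beta> = lam + real_of_ereal (A i j) - real_of_ereal (B i h)"
    have "\<bar>real_of_ereal (A i j) - real_of_ereal (B i h)\<bar> \<le> W" using Wb i j h by auto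
    then have "\<bar>\<beta>\<bar> \<le> \<bar>lam\<bar> + W" unfolding \<beta>_def by linarith
    moreover have "\<beta> \<le> v h - v j" using h(3) unfolding \<beta>_def by linarith
    ultimately have "\<beta> \<le> u h - u j" using P j h(1) by blast
    then show "\<exists>h<n. B i h \<noteq> -\<infinity> \<and> lam + u j + real_of_ereal (A i j) \<le> real_of_ereal (B i h) + u h"
      using h unfolding \<beta>_def by (intro exI[of _ h]) auto
  qed
  obtain i where i: "i < m" "A i j \<noteq> -\<infinity>"
    "\<forall>h<n. B i h \<noteq> -\<infinity> \<longrightarrow> real_of_ereal (B i h) + v h \<le> lam + v j + real_of_ereal (A i j)"
    using assms(1) j unfolding cbias_def by blast
  have "\<forall>h<n. B i h \<noteq> -\<infinity> \<longrightarrow> real_of_ereal (B i h) + u h \<le> lam + u j + real_of_ereal (A i j)"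
  proof (intro allI impI)
    fix h assume h: "h < n" "B i h \<noteq> -\<infinity>"
    define \<beta> where "\<beta> = lam + real_of_ereal (A i j) - real_of_ereal (B i h)"
    have "\<bar>real_of_ereal (A i j) - real_of_ereal (B i h)\<bar> \<le> W" using Wb i j h by auto
    then have "\<bar>\<beta>\<bar> \<le> \<bar>lam\<bar> + W" unfolding \<beta>_def by linarith
    moreover have "v h - v j \<le> \<beta>" using i(3) h unfolding \<beta>_def by force
    ultimately have "u h - u j \<le> \<beta>" using P j h(1) by blast
    then show "real_of_ereal (B i h) + u h \<le> lam + u j + real_of_ereal (A i j)" unfolding \<beta>_def by linarith
  qed
  then show "\<exists>i<m. A i j \<noteq> -\<infinity> \<and> (\<forall>h<n. B i h \<noteq> -\<infinity> \<longrightarrow> real_of_ereal (B i h) + u h \<le> lam + u j + real_of_ereal (A i j))"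
    using i by blast
qed

lemma chain:
  fixes S :: "real set"
  assumes "finite S" "K \<ge> 0" "\<forall>x\<in>S. x < Max S \<longrightarrow> (\<exists>z\<in>S. x < z \<and> z \<le> x + K)"
  shows "x \<in> S \<Longrightarrow> Max S - x \<le> real (card {z\<in>S. x < z}) * K"
proof (induction "card {z\<in>S. x < z}" arbitrary: x rule: less_induct)
  case less
  have mx: "x \<le> Max S" using Max_ge[OF assms(1) less.prems] .
  show ?case
  proof (cases "x = Max S")
    case True then show ?thesis using assms(2) by simp
  next
    case False
    then obtain z where z: "z \<in> S" "x < z" "z \<le> x + K" using assms(3) less.prems mx by force
    have sub: "{y\<in>S. z < y} \<subset> {y\<in>S. x < y}" using z by auto
    have fin: "finite {y\<in>S. x < y}" using assms(1) by auto
    have lt: "card {y\<in>S. z < y} < card {y\<in>S. x < y}" by (rule psubset_card_mono[OF fin sub])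
    have IH: "Max S - z \<le> real (card {y\<in>S. z < y}) * K" using less.hyps[OF lt z(1)] .
    have "real (card {y\<in>S. z < y}) + 1 \<le> real (card {y\<in>S. x < y})" using lt by linarith
    then have "(real (card {y\<in>S. z < y}) + 1) * K \<le> real (card {y\<in>S. x < y}) * K"
      using assms(2) by (rule mult_right_mono)
    then show ?thesis using IH z(3) by (simp add: algebra_simps)
  qed
qed

lemma reduce:
  fixes v :: "nat \<Rightarrow> real" and n :: nat
  assumes n1: "n \<ge> 1"
    and Wb: "\<forall>i<m. \<forall>j<n. \<forall>h<n. A i j \<noteq> -\<infinity> \<longrightarrow> B i h \<noteq> -\<infinity> \<longrightarrow> \<bar>real_of_ereal (A i j) - real_of_ereal (B i h)\<bar> \<le> W"
    and K: "K = \<bar>lam\<bar> + W" "K \<ge> 0"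
  shows "cbias A B m n lam v \<Longrightarrow> \<exists>u. cbias A B m n lam u \<and> hnorm n u \<le> (real n - 1) * K"
proof (induction "card {p \<in> {..<n}\<times>{..<n}. v (snd p) - v (fst p) > K}" arbitrary: v rule: less_induct)
  case less
  let ?S = "v ` {..<n}"
  have fS: "finite ?S" "?S \<noteq> {}" using n1 by (auto simp: lessThan_empty_iff)
  show ?case
  proof (cases "\<exists>j<n. v j < Max ?S \<and> \<not> (\<exists>h<n. v j < v h \<and> v h \<le> v j + K)")
    case True
    then obtain j where j: "j < n" "v j < Max ?S" "\<not> (\<exists>h<n. v j < v h \<and> v h \<le> v j + K)" by blast
    define c where "c = v j"
    define D where "D = {x \<in> ?S. c < x}"
    have "Max ?S \<in> D" unfolding D_def c_def using j Max_in[OF fS] by auto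
    then have fD: "finite D" "D \<noteq> {}" unfolding D_def using fS(1) by auto
    define d where "d = Min D"
    have "d \<in> D" unfolding d_def using fD by (rule Min_in)
    then obtain hd where hd: "hd < n" "v hd = d" "c < d" unfolding D_def by auto
    have dK: "d > c + K" using j(3) hd unfolding c_def by force
    have gap: "v k \<le> c" if "k < n" "v k < d" for k
    proof (rule ccontr)
      assume "\<not> v k \<le> c"
      then have "v k \<in> D" unfolding D_def using that by auto
      then have "d \<le> v k" unfolding d_def using fD by auto
      then show False using that by simp
    qed
    define s where "s = d - c - K"
    define u where "u = (\<lambda>k. if v k \<ge> d then v k - s else v k)"
    have P: "\<forall>j<n. \<forall>h<n. \<forall>\<beta>. \<bar>\<beta>\<bar> \<le> \<bar>lam\<bar> + W \<longrightarrow> (\<beta> \<le> v h - v j \<longrightarrow> \<beta> \<le> u h - u j) \<and> (v h - v j \<le> \<beta> \<longrightarrow> u h - u j \<le> \<beta>)"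
    proof (intro allI impI)
      fix j' h' \<beta> assume a: "j' < n" "h' < n" "\<bar>\<beta>\<bar> \<le> \<bar>lam\<bar> + W"
      have g1: "v j' \<ge> d \<or> v j' \<le> c" using gap a(1) by force
      have g2: "v h' \<ge> d \<or> v h' \<le> c" using gap a(2) by force
      show "(\<beta> \<le> v h' - v j' \<longrightarrow> \<beta> \<le> u h' - u j') \<and> (v h' - v j' \<le> \<beta> \<longrightarrow> u h' - u j' \<le> \<beta>)"
        using g1 g2 a(3) K dK hd(3) unfolding u_def s_def by (auto split: if_splits)
    qed
    have cu: "cbias A B m n lam u" by (rule transfer[OF less.prems Wb P])
    let ?N = "\<lambda>w. {p \<in> {..<n}\<times>{..<n}. w (snd p) - w (fst p) > K}"
    have sub: "?N u \<subseteq> ?N v"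
    proof
      fix p assume p: "p \<in> ?N u"
      have "\<not> (v (snd p) - v (fst p) \<le> K)"
      proof
        assume "v (snd p) - v (fst p) \<le> K"
        moreover have "fst p < n" "snd p < n" using p by auto
        moreover have "\<bar>K\<bar> \<le> \<bar>lam\<bar> + W" using K by simp
        ultimately have "u (snd p) - u (fst p) \<le> K" using P by blast
        then show False using p by auto
      qed
      then show "p \<in> ?N v" using p by auto
    qed
    have inv: "(j, hd) \<in> ?N v" using j hd dK unfolding c_def by auto
    have "u j = c" using hd(3) unfolding u_def c_def by auto
    moreover have "u hd = d - s" using hd unfolding u_def by auto
    ultimately have "(j, hd) \<notin> ?N u" unfolding s_def by auto
    then have "?N u \<subset> ?N v" using sub inv by blast
    moreover have "finite (?N v)" by (rule finite_subset[of _ "{..<n}\<times>{..<n}"]) auto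
    ultimately have "card (?N u) < card (?N v)" by (rule psubset_card_mono[rotated])
    from less.hyps[OF this cu] show ?thesis .
  next
    case False
    have hyp: "\<forall>x\<in>?S. x < Max ?S \<longrightarrow> (\<exists>z\<in>?S. x < z \<and> z \<le> x + K)" using False by auto
    have mi: "Min ?S \<in> ?S" using fS by (rule Min_in)
    have "Max ?S - Min ?S \<le> real (card {z\<in>?S. Min ?S < z}) * K"
      by (rule chain[OF fS(1) K(2) hyp mi])
    also have "\<dots> \<le> (real n - 1) * K"
    proof -
      have "{z\<in>?S. Min ?S < z} \<subseteq> ?S - {Min ?S}" by auto
      then have "card {z\<in>?S. Min ?S < z} \<le> card (?S - {Min ?S})" using fS by (intro card_mono) auto
      also have "\<dots> = card ?S - 1" using mi fS by simp
      also have "\<dots> \<le> n - 1" using card_image_le[of "{..<n}" v] by simp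
      finally have "real (card {z\<in>?S. Min ?S < z}) \<le> real n - 1" using n1 by linarith
      then show ?thesis using K(2) by (rule mult_right_mono)
    qed
    finally show ?thesis using less.prems unfolding hnorm_def by blast
  qed
qed

theorem mainTheorem12:
  fixes A B :: "nat \<Rightarrow> nat \<Rightarrow> ereal" and m n :: nat and v :: "nat \<Rightarrow> real"
  assumes "m \<ge> 1" and "n \<ge> 1"
    and "\<forall>i<m. \<forall>j<n. A i j \<noteq> \<infinity> \<and> B i j \<noteq> \<infinity>"
    and "\<forall>j<n. \<exists>i<m. A i j \<noteq> -\<infinity>"
    and "\<forall>i<m. \<exists>j<n. B i j \<noteq> -\<infinity>"
    and "\<exists>lam. is_bias A B m n lam v"
  shows "R_F A B m n \<le> (real n - 1) * (\<bar>rho A B m n\<bar> + W_const A B m n)"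
proof -
  note bi = bias_iff[OF assms(1,2,3,5)]
  obtain lam where lam: "is_bias A B m n lam v" using assms(6) by blast
  have cv: "cbias A B m n lam v" using lam bi by blast
  have rho: "rho A B m n = lam"
    unfolding rho_def
  proof (rule the_equality)
    show "\<exists>v. is_bias A B m n lam v" using lam by blast
    fix mu assume "\<exists>w. is_bias A B m n mu w"
    then obtain w where "cbias A B m n mu w" using bi by blast
    then show "mu = lam" using cbias_unique[OF assms(2) cv] cbias_unique[OF assms(2) _ cv] by force
  qed
  define W where "W = W_const A B m n"
  let ?WS = "{\<bar>real_of_ereal (A i j) - real_of_ereal (B i h)\<bar> | i j h.
       i < m \<and> j < n \<and> h < n \<and> A i j \<noteq> -\<infinity> \<and> B i h \<noteq> -\<infinity>}"
  have finW: "finite ?WS"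
    by (rule finite_subset[of _ "(\<lambda>(i,j,h). \<bar>real_of_ereal (A i j) - real_of_ereal (B i h)\<bar>) ` ({..<m}\<times>{..<n}\<times>{..<n})"]) force+
  have Wb: "\<forall>i<m. \<forall>j<n. \<forall>h<n. A i j \<noteq> -\<infinity> \<longrightarrow> B i h \<noteq> -\<infinity> \<longrightarrow> \<bar>real_of_ereal (A i j) - real_of_ereal (B i h)\<bar> \<le> W"
    unfolding W_def W_const_def using Max_ge[OF finW] by blast
  obtain i0 where i0: "i0 < m" "A i0 0 \<noteq> -\<infinity>" using assms(2,4) by force
  obtain h0 where h0: "h0 < n" "B i0 h0 \<noteq> -\<infinity>" using assms(5) i0 by force
  have W0: "W \<ge> 0" using Wb i0 h0 assms(2) by force
  define K where "K = \<bar>lam\<bar> + W"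
  have K0: "K \<ge> 0" using W0 unfolding K_def by simp
  obtain u where u: "cbias A B m n lam u" "hnorm n u \<le> (real n - 1) * K"
    using reduce[OF assms(2) Wb K_def K0 cv] by blast
  have ub: "is_bias A B m n (rho A B m n) u" using u(1) bi rho by simp
  have hn0: "hnorm n w \<ge> 0" for w
  proof -
    have fS: "finite (w ` {..<n})" "w ` {..<n} \<noteq> {}" using assms(2) by (auto simp: lessThan_empty_iff)
    have "Min (w ` {..<n}) \<le> w 0" using fS assms(2) by (intro Min_le) auto
    also have "\<dots> \<le> Max (w ` {..<n})" using fS assms(2) by (intro Max_ge) auto
    finally show ?thesis unfolding hnorm_def by simp
  qed
  have "R_F A B m n \<le> hnorm n u"
    unfolding R_F_def
  proof (rule cInf_lower)
    show "hnorm n u \<in> {hnorm n u |u. is_bias A B m n (rho A B m n) u}" using ub by blast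
    show "bdd_below {hnorm n u |u. is_bias A B m n (rho A B m n) u}"
      by (rule bdd_belowI[of _ 0]) (use hn0 in auto)
  qed
  then show ?thesis using u(2) rho unfolding K_def W_def by simp
qed

end
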